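(* Let $W:A^{\mathbb{Z}}\times\mathcal{B}^{\mathbb{Z}}\to\mathbb{C}$ be a cq-channel and $K:\mathcal{B}^{\mathbb{Z}}\to B(A^{\mathbb{Z}},\Sigma_c)$, $(K(b))(x)=W(x,b)$, the associated map. (a) The following are equivalent: (1) $K(\mathcal{B}^{\mathbb{Z}})\subseteq C(A^{\mathbb{Z}})$; (2) for each $b\in\mathcal{B}^{\mathbb{Z}}$, $\lim_{n\to\infty}\sup_{x,y\in A^{\mathbb{Z}}:\,x_{-n}^{n}=y_{-n}^{n}}|W(x,b)-W(y,b)|=0$. (b) If $W$ has decaying input memory and anticipation (DIMA), then $K(\mathcal{B}^{\mathbb{Z}})\subseteq C(A^{\mathbb{Z}})$.
   Context: $A$ finite, $\mathcal{B}=\mathcal{L}(\mathcal{H})$ with $\mathcal{H}$ finite-dimensional, $\mathcal{B}^{\mathbb{Z}}$ the quasi-local $C^*$-algebra (norm completion of the union of $\mathcal{B}^{[n,m]}=\bigotimes_{i=n}^m\mathcal{B}$ with natural embeddings). $\Sigma_c$ is the Borel (= cylinder) $\sigma$-field of $A^{\mathbb{Z}}$ with product topology, $B(A^{\mathbb{Z}},\Sigma_c)$ bounded Borel functions, $C(A^{\mathbb{Z}})$ continuous functions. $x_{n}^{m}=(x_n,\dots,x_m)$. A cq-channel is $W:A^{\mathbb{Z}}\times\mathcal{B}^{\mathbb{Z}}\to\mathbb{C}$ with $x\mapsto W(x,b)$ Borel measurable and $b\mapsto W(x,b)$ a state. $W$ is DIMA if for every $\varepsilon>0$ there are nonnegative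 integers $m(\varepsilon),a(\varepsilon)$ such that for all $n\in\mathbb{Z}$, $k\in\mathbb{N}$, all $b\in\mathcal{B}^{[n,n+k]}$ with $0\le b\le\mathbf{1}$, and all $m\ge m(\varepsilon)$, $a\ge a(\varepsilon)$: $|W(x,b)-W(x',b)|\le\varepsilon$ whenever $x_i=x'_i$ for $n-m\le i\le n+k+a$. *)

theory Defs
  imports "HOL-Analysis.Analysis"
begin

text \<open>
  The input alphabet A is a finite type 'a carrying the discrete
  topology; A^Z is the type int => 'a with the product topology (Function_Topology),
  and its Borel sigma-algebra is borel.
  H is a finite-dimensional Hilbert space with orthonormal basis indexed by a finite
  type 'h, i.e. H = l2('h), B = L(H).  A configuration is a map int => 'h; the vectors
  delta_w (w a configuration) form an orthonormal basis of the Hilbert space l2(cfg).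
  An element b of B^[n,m] acts on l2(cfg) as b (x) 1 and is identified with its matrix
  (kernel) K w w' = <delta_w, (b (x) 1) delta_w'>.  This representation of the
  quasi-local algebra is faithful, so B^Z is identified with the set of kernels that
  are pointwise limits of norm-Cauchy sequences of local kernels.
\<close>

type_synonym 'h kernel = "(int \<Rightarrow> 'h) \<Rightarrow> (int \<Rightarrow> 'h) \<Rightarrow> complex"

text \<open>K is (the kernel of) an element of B^I, I a set of sites: K = M (x) 1.\<close>
definition local_on :: "int set \<Rightarrow> 'h kernel \<Rightarrow> bool" where
  "local_on I K \<longleftrightarrow>
     (\<forall>w w'. (\<exists>i. i \<notin> I \<and> w i \<noteq> w' i) \<longrightarrow> K w w' = 0) \<and>
     (\<forall>w w' v v'. (\<forall>i\<in>I. w i = v i \<and> w' i = v' i) \<and>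
                   (\<forall>i. i \<notin> I \<longrightarrow> w i = w' i \<and> v i = v' i)
                   \<longrightarrow> K w w' = K v v')"

definition local_elem :: "'h kernel \<Rightarrow> bool" where
  "local_elem K \<longleftrightarrow> (\<exists>n m. local_on {n..m} K)"

definition fin_vec :: "((int \<Rightarrow> 'h) \<Rightarrow> complex) \<Rightarrow> bool" where
  "fin_vec u \<longleftrightarrow> finite {w. u w \<noteq> 0}"

definition vnorm :: "((int \<Rightarrow> 'h) \<Rightarrow> complex) \<Rightarrow> real" where
  "vnorm u = sqrt (\<Sum>w\<in>{w. u w \<noteq> 0}. (cmod (u w))\<^sup>2)"

definition kform :: "((int \<Rightarrow> 'h) \<Rightarrow> complex) \<Rightarrow> 'h kernel \<Rightarrow> ((int \<Rightarrow> 'h) \<Rightarrow> complex) \<Rightarrow> complex" where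
  "kform u K v = (\<Sum>w\<in>{w. u w \<noteq> 0}. \<Sum>w'\<in>{w'. v w' \<noteq> 0}. cnj (u w) * K w w' * v w')"

definition knorm :: "'h kernel \<Rightarrow> real" where
  "knorm K = (SUP p \<in> {(u, v). fin_vec u \<and> fin_vec v \<and> vnorm u \<le> 1 \<and> vnorm v \<le> 1}.
                 cmod (kform (fst p) K (snd p)))"

definition kadd :: "'h kernel \<Rightarrow> 'h kernel \<Rightarrow> 'h kernel" where
  "kadd K L = (\<lambda>w w'. K w w' + L w w')"

definition kscale :: "complex \<Rightarrow> 'h kernel \<Rightarrow> 'h kernel" where
  "kscale c K = (\<lambda>w w'. c * K w w')"

definition kminus :: "'h kernel \<Rightarrow> 'h kernel \<Rightarrow> 'h kernel" where
  "kminus K L = (\<lambda>w w'. K w w' - L w w')"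

definition kone :: "'h kernel" where
  "kone = (\<lambda>w w'. if w = w' then 1 else 0)"

definition quasi_local :: "'h kernel set" where
  "quasi_local = {K. \<exists>b :: nat \<Rightarrow> 'h kernel.
       (\<forall>n. local_elem (b n)) \<and>
       (\<forall>e>0. \<exists>N. \<forall>p\<ge>N. \<forall>q\<ge>N. knorm (kminus (b p) (b q)) < e) \<and>
       (\<forall>w w'. (\<lambda>n. b n w w') \<longlonglongrightarrow> K w w')}"

definition kpos :: "'h kernel \<Rightarrow> bool" where
  "kpos K \<longleftrightarrow> (\<forall>u. fin_vec u \<longrightarrow> Im (kform u K u) = 0 \<and> 0 \<le> Re (kform u K u))"

definition is_state :: "('h kernel \<Rightarrow> complex) \<Rightarrow> bool" where
  "is_state \<phi> \<longleftrightarrow>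
     (\<forall>K\<in>quasi_local. \<forall>L\<in>quasi_local. \<phi> (kadd K L) = \<phi> K + \<phi> L) \<and>
     (\<forall>c. \<forall>K\<in>quasi_local. \<phi> (kscale c K) = c * \<phi> K) \<and>
     (\<forall>K\<in>quasi_local. kpos K \<longrightarrow> Im (\<phi> K) = 0 \<and> 0 \<le> Re (\<phi> K)) \<and>
     \<phi> kone = 1"

definition cq_channel :: "((int \<Rightarrow> 'a::topological_space) \<Rightarrow> 'h kernel \<Rightarrow> complex) \<Rightarrow> bool" where
  "cq_channel W \<longleftrightarrow>
     (\<forall>b\<in>quasi_local. (\<lambda>x. W x b) \<in> borel_measurable borel) \<and>
     (\<forall>x. is_state (W x))"

definition cq_K :: "((int \<Rightarrow> 'a) \<Rightarrow> 'h kernel \<Rightarrow> complex) \<Rightarrow> 'h kernel \<Rightarrow> (int \<Rightarrow> 'a) \<Rightarrow> complex" where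
  "cq_K W b = (\<lambda>x. W x b)"

definition DIMA :: "((int \<Rightarrow> 'a) \<Rightarrow> 'h kernel \<Rightarrow> complex) \<Rightarrow> bool" where
  "DIMA W \<longleftrightarrow>
     (\<forall>e>0. \<exists>m0 a0 :: nat. \<forall>(n::int) (k::nat) b.
        local_on {n..n + int k} b \<and> kpos b \<and> kpos (kminus kone b) \<longrightarrow>
        (\<forall>m a x x'. m \<ge> m0 \<and> a \<ge> a0 \<and>
            (\<forall>i. n - int m \<le> i \<and> i \<le> n + int k + int a \<longrightarrow> x i = x' i)
            \<longrightarrow> cmod (W x b - W x' b) \<le> e))"

end

theory Submission
  imports Defs
begin

definition agree :: "nat \<Rightarrow> (int \<Rightarrow> 'a) \<Rightarrow> (int \<Rightarrow> 'a) \<Rightarrow> bool" where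
  "agree n x y \<longleftrightarrow> (\<forall>i. - int n \<le> i \<and> i \<le> int n \<longrightarrow> x i = y i)"

definition UC :: "((int \<Rightarrow> 'a) \<Rightarrow> complex) \<Rightarrow> bool" where
  "UC f \<longleftrightarrow> (\<forall>e>0. \<exists>n. \<forall>x y. agree n x y \<longrightarrow> cmod (f x - f y) \<le> e)"

lemma open_cyl: "open {y::int \<Rightarrow> 'a::discrete_topology. agree n x y}"
proof -
  have "open {f::int \<Rightarrow> 'a. \<forall>i\<in>{- int n..int n}. f (id i) \<in> {x i}}"
    by (rule product_topology_basis') (auto simp: open_discrete)
  moreover have "{f::int \<Rightarrow> 'a. \<forall>i\<in>{- int n..int n}. f (id i) \<in> {x i}} = {y. agree n x y}"
    by (auto simp: agree_def)
  ultimately show ?thesis by simp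
qed

lemma agree_mono: "agree n x y \<Longrightarrow> m \<le> n \<Longrightarrow> agree m x y"
  by (auto simp: agree_def)

lemma agree_sym: "agree n x y \<Longrightarrow> agree n y x"
  by (auto simp: agree_def)

lemma agree_trans: "agree n x y \<Longrightarrow> agree n y z \<Longrightarrow> agree n x z"
  by (auto simp: agree_def)

lemma UC_imp_cont:
  fixes f :: "(int \<Rightarrow> 'a::discrete_topology) \<Rightarrow> complex"
  assumes "UC f" shows "continuous_on UNIV f"
proof -
  have "(f \<longlongrightarrow> f x) (at x)" for x
  proof -
    have "\<forall>\<^sub>F y in at x. dist (f y) (f x) < e" if e: "e > 0" for e
    proof -
      obtain n where n: "\<And>x y. agree n x y \<Longrightarrow> cmod (f x - f y) \<le> e/2"
        using assms e unfolding UC_def by (meson half_gt_zero)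
      show ?thesis unfolding eventually_at_topological
      proof (intro exI conjI ballI impI)
        show "open {y. agree n x y}" by (rule open_cyl)
        show "x \<in> {y. agree n x y}" by (simp add: agree_def)
        fix y assume "y \<in> {y. agree n x y}"
        then have "agree n y x" by (simp add: agree_sym)
        then have "cmod (f y - f x) \<le> e/2" by (rule n)
        then show "dist (f y) (f x) < e" using e by (simp add: dist_norm)
      qed
    qed
    then show ?thesis by (simp add: tendsto_iff)
  qed
  then show ?thesis by (simp add: continuous_on_def)
qed

lemma cont_nbhd:
  fixes f :: "(int \<Rightarrow> 'a::discrete_topology) \<Rightarrow> complex"
  assumes "continuous_on UNIV f" "e > 0"
  shows "\<exists>n. \<forall>y. agree n x y \<longrightarrow> dist (f y) (f x) < e"
proof -
  have "open (f -` ball (f x) e)"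
    by (rule open_vimage[OF open_ball assms(1)])
  then have o: "openin (product_topology (\<lambda>i. euclidean) UNIV) (f -` ball (f x) e)"
    by (simp add: open_fun_def)
  have xin: "x \<in> f -` ball (f x) e" using assms(2) by simp
  have "\<exists>X. x \<in> (\<Pi>\<^sub>E i\<in>UNIV. X i) \<and> (\<forall>i. openin euclidean (X i)) \<and> finite {i. X i \<noteq> topspace euclidean} \<and> (\<Pi>\<^sub>E i\<in>UNIV. X i) \<subseteq> f -` ball (f x) e"
    by (rule product_topology_open_contains_basis[OF o xin])
  then obtain X where X: "x \<in> (\<Pi>\<^sub>E i\<in>UNIV. X i)" "finite {i. X i \<noteq> topspace euclidean}"
     "(\<Pi>\<^sub>E i\<in>UNIV. X i) \<subseteq> f -` ball (f x) e"
    by blast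
  define F where "F = {i. X i \<noteq> UNIV}"
  have fF: "finite F" using X(2) by (simp add: F_def)
  define n where "n = nat (Max (insert 0 (abs ` F)))"
  have nb: "\<bar>i\<bar> \<le> int n" if "i \<in> F" for i
  proof -
    have "\<bar>i\<bar> \<le> Max (insert 0 (abs ` F))" using fF that by (intro Max_ge) auto
    moreover have "0 \<le> Max (insert 0 (abs ` F))" using fF by (intro Max_ge) auto
    ultimately show ?thesis by (simp add: n_def)
  qed
  have "dist (f y) (f x) < e" if "agree n x y" for y
  proof -
    have "y \<in> (\<Pi>\<^sub>E i\<in>UNIV. X i)"
    proof -
      have "y i \<in> X i" for i
      proof (cases "i \<in> F")
        case True
        have "- int n \<le> i \<and> i \<le> int n" using nb[OF True] by (auto simp: abs_le_iff)
        then have "x i = y i" using that by (auto simp: agree_def)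
        then show ?thesis using X(1) by (simp add: PiE_iff) (metis)
      next
        case False then show ?thesis by (auto simp: F_def)
      qed
      then show ?thesis by (simp add: PiE_iff)
    qed
    then have "y \<in> f -` ball (f x) e" using X(3) by blast
    then show ?thesis by (simp add: dist_commute)
  qed
  then show ?thesis by blast
qed

lemma compact_fun_UNIV: "compact (UNIV :: (int \<Rightarrow> 'a::{finite,discrete_topology}) set)"
proof -
  have "compact_space (euclidean :: 'a topology)"
    by (simp add: compact_space_def finite_imp_compact)
  then have "compact_space (product_topology (\<lambda>i::int. (euclidean :: 'a topology)) UNIV)"
    by (simp add: compact_space_product_topology)
  then show ?thesis
    by (simp add: euclidean_product_topology compact_space_def)
qed

lemma cont_imp_UC:
  fixes f :: "(int \<Rightarrow> 'a::{finite,discrete_topology}) \<Rightarrow> complex"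
  assumes "continuous_on UNIV f" shows "UC f"
  unfolding UC_def
proof (intro allI impI)
  fix e :: real assume e: "e > 0"
  define nx where "nx x = (SOME n. \<forall>y. agree n x y \<longrightarrow> dist (f y) (f x) < e/2)" for x
  have nx: "\<forall>y. agree (nx x) x y \<longrightarrow> dist (f y) (f x) < e/2" for x
    unfolding nx_def by (rule someI_ex) (rule cont_nbhd[OF assms], use e in simp)
  have cov: "UNIV \<subseteq> (\<Union>x\<in>UNIV. {y. agree (nx x) x y})"
    by (auto simp: agree_def)
  obtain D where D: "finite D" "UNIV \<subseteq> (\<Union>x\<in>D. {y. agree (nx x) x y})"
    using compactE_image[OF compact_fun_UNIV open_cyl cov] by metis
  define n where "n = Max (insert 0 (nx ` D))"
  have "cmod (f y - f z) \<le> e" if "agree n y z" for y z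
  proof -
    obtain x where x: "x \<in> D" "agree (nx x) x y" using D(2) by blast
    have "nx x \<le> n" using D(1) x(1) by (simp add: n_def)
    then have "agree (nx x) y z" using that agree_mono by blast
    then have "agree (nx x) x z" using x(2) agree_trans by blast
    then have "dist (f z) (f x) < e/2" "dist (f y) (f x) < e/2" using nx x(2) by auto
    then have "cmod (f z - f x) < e/2" "cmod (f y - f x) < e/2" by (simp_all add: dist_norm)
    moreover have "cmod (f y - f z) \<le> cmod (f y - f x) + cmod (f z - f x)"
      using norm_triangle_ineq4[of "f y - f x" "f z - f x"] by simp
    ultimately show ?thesis by linarith
  qed
  then show "\<exists>n. \<forall>x y. agree n x y \<longrightarrow> cmod (f x - f y) \<le> e" by blast
qed

definition kct :: "'h kernel \<Rightarrow> 'h kernel" where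
  "kct K = (\<lambda>w w'. cnj (K w' w))"

definition kb :: "real \<Rightarrow> 'h kernel \<Rightarrow> bool" where
  "kb r K \<longleftrightarrow> (\<forall>u v. fin_vec u \<longrightarrow> fin_vec v \<longrightarrow> cmod (kform u K v) \<le> r * vnorm u * vnorm v)"

definition kb1 :: "real \<Rightarrow> 'h kernel \<Rightarrow> bool" where
  "kb1 r K \<longleftrightarrow> (\<forall>u v. fin_vec u \<longrightarrow> fin_vec v \<longrightarrow> vnorm u \<le> 1 \<longrightarrow> vnorm v \<le> 1 \<longrightarrow>
      cmod (kform u K v) \<le> r)"

lemma kform_kadd: "kform u (kadd K L) v = kform u K v + kform u L v"
  by (simp add: kform_def kadd_def algebra_simps sum.distrib)

lemma kform_kscale: "kform u (kscale c K) v = c * kform u K v"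
  by (simp add: kform_def kscale_def sum_distrib_left mult_ac)

lemma kform_kminus: "kform u (kminus K L) v = kform u K v - kform u L v"
  by (simp add: kform_def kminus_def algebra_simps sum_subtractf)

lemma kform_kct: "kform u (kct K) v = cnj (kform v K u)"
  unfolding kform_def kct_def
  by (simp add: sum.swap[of _ "{w. u w \<noteq> 0}"] mult_ac)

lemma vnorm_nonneg: "vnorm u \<ge> 0"
  by (simp add: vnorm_def sum_nonneg)

lemma vnorm_sq: "(vnorm u)^2 = (\<Sum>w\<in>{w. u w \<noteq> 0}. (cmod (u w))\<^sup>2)"
  by (simp add: vnorm_def sum_nonneg)

lemma kform_kone: assumes "fin_vec u" shows "kform u kone u = of_real ((vnorm u)^2)"
proof -
  have fin: "finite {w. u w \<noteq> 0}" using assms by (simp add: fin_vec_def)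
  have "kform u kone u = (\<Sum>w\<in>{w. u w \<noteq> 0}. cnj (u w) * u w)"
    unfolding kform_def kone_def
  proof (rule sum.cong[OF refl])
    fix w assume w: "w \<in> {w. u w \<noteq> 0}"
    have "(\<Sum>w'\<in>{w. u w \<noteq> 0}. cnj (u w) * (if w = w' then 1 else 0) * u w')
        = (\<Sum>w'\<in>{w. u w \<noteq> 0}. if w = w' then cnj (u w) * u w' else 0)"
      by (rule sum.cong) auto
    also have "\<dots> = cnj (u w) * u w" using sum.delta'[OF fin, of w "\<lambda>w'. cnj (u w) * u w'"] w by simp
    finally show "(\<Sum>w'\<in>{w. u w \<noteq> 0}. cnj (u w) * (if w = w' then 1 else 0) * u w') = cnj (u w) * u w" .
  qed
  also have "\<dots> = (\<Sum>w\<in>{w. u w \<noteq> 0}. of_real ((cmod (u w))\<^sup>2))"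
    by (rule sum.cong) (auto, metis complex_norm_square mult.commute of_real_power)
  finally show ?thesis by (simp add: vnorm_sq)
qed

lemma kform_zero_left: "{w. u w \<noteq> 0} = {} \<Longrightarrow> kform u K v = 0"
  by (simp add: kform_def)

lemma kform_zero_right: "{w. v w \<noteq> 0} = {} \<Longrightarrow> kform u K v = 0"
  by (simp add: kform_def)

lemma vnorm_zero: assumes "fin_vec u" "vnorm u = 0" shows "{w. u w \<noteq> 0} = {}"
proof -
  have fin: "finite {w. u w \<noteq> 0}" using assms(1) by (simp add: fin_vec_def)
  have s0: "(\<Sum>w\<in>{w. u w \<noteq> 0}. (cmod (u w))\<^sup>2) = 0" using assms(2) vnorm_sq[of u] by simp
  show ?thesis
  proof (rule ccontr)
    assume "{w. u w \<noteq> 0} \<noteq> {}"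
    then obtain w0 where w0: "u w0 \<noteq> 0" by blast
    have "(cmod (u w0))\<^sup>2 \<le> (\<Sum>w\<in>{w. u w \<noteq> 0}. (cmod (u w))\<^sup>2)"
      by (rule member_le_sum) (use fin w0 in auto)
    moreover have "(cmod (u w0))\<^sup>2 > 0" using w0 by simp
    ultimately show False using s0 by simp
  qed
qed

lemma vnorm_scale:
  assumes "a > 0"
  shows "vnorm (\<lambda>w. u w / complex_of_real a) = vnorm u / a"
    and "{w. u w / complex_of_real a \<noteq> 0} = {w. u w \<noteq> 0}"
proof -
  have a0: "complex_of_real a \<noteq> 0" using assms by simp
  show S: "{w. u w / complex_of_real a \<noteq> 0} = {w. u w \<noteq> 0}" using a0 by simp
  have t: "(cmod (u w / complex_of_real a))\<^sup>2 = (cmod (u w))\<^sup>2 / a^2" for w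
    using assms by (simp add: norm_divide power_divide)
  have "(\<Sum>w\<in>{w. u w \<noteq> 0}. (cmod (u w / complex_of_real a))\<^sup>2)
        = (\<Sum>w\<in>{w. u w \<noteq> 0}. (cmod (u w))\<^sup>2) / a^2"
    unfolding t by (rule sum_divide_distrib[symmetric])
  then have "vnorm (\<lambda>w. u w / complex_of_real a) = sqrt ((\<Sum>w\<in>{w. u w \<noteq> 0}. (cmod (u w))\<^sup>2) / a^2)"
    unfolding vnorm_def S by simp
  also have "\<dots> = vnorm u / a"
    unfolding vnorm_def real_sqrt_divide using assms by simp
  finally show "vnorm (\<lambda>w. u w / complex_of_real a) = vnorm u / a" .
qed

lemma kb1_kb: assumes "kb1 r K" shows "kb r K"
  unfolding kb_def
proof (intro allI impI)
  fix u v :: "(int \<Rightarrow> 'a) \<Rightarrow> complex" assume fu: "fin_vec u" and fv: "fin_vec v"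
  show "cmod (kform u K v) \<le> r * vnorm u * vnorm v"
  proof (cases "vnorm u = 0 \<or> vnorm v = 0")
    case True
    then have "kform u K v = 0"
      using vnorm_zero[OF fu] vnorm_zero[OF fv] kform_zero_left kform_zero_right by blast
    then show ?thesis using True by auto
  next
    case False
    define a where "a = vnorm u"
    define b where "b = vnorm v"
    have a: "a > 0" and b: "b > 0" using False vnorm_nonneg[of u] vnorm_nonneg[of v]
      by (auto simp: a_def b_def)
    define u' where "u' = (\<lambda>w. u w / complex_of_real a)"
    define v' where "v' = (\<lambda>w. v w / complex_of_real b)"
    have su: "{w. u' w \<noteq> 0} = {w. u w \<noteq> 0}" and sv: "{w. v' w \<noteq> 0} = {w. v w \<noteq> 0}"
      using vnorm_scale(2)[OF a] vnorm_scale(2)[OF b] by (auto simp: u'_def v'_def)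
    have nu: "vnorm u' = 1" and nv: "vnorm v' = 1"
      using vnorm_scale(1)[OF a, of u] vnorm_scale(1)[OF b, of v] a b
      by (auto simp: u'_def v'_def a_def b_def)
    have fu': "fin_vec u'" "fin_vec v'" using fu fv su sv by (auto simp: fin_vec_def)
    have "kform u' K v' = kform u K v / complex_of_real (a * b)"
      unfolding kform_def su sv sum_divide_distrib
      by (rule sum.cong[OF refl], rule sum.cong[OF refl]) (simp add: u'_def v'_def)
    then have "kform u K v = complex_of_real (a * b) * kform u' K v'"
      using a b by simp
    then have "cmod (kform u K v) = a * b * cmod (kform u' K v')"
      using a b by (simp add: norm_mult)
    also have "\<dots> \<le> a * b * r"
      using assms fu' nu nv a b unfolding kb1_def by (simp add: mult_left_mono)
    finally show ?thesis by (simp add: a_def b_def mult_ac)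
  qed
qed

lemma amgm_aux:
  fixes a b k k' :: real
  assumes "0 \<le> a" "0 \<le> b" "0 \<le> k" "k \<le> k'"
  shows "a * k * b \<le> k' * (a\<^sup>2 + b\<^sup>2) / 2"
proof -
  have "a * b \<le> (a\<^sup>2 + b\<^sup>2) / 2" using sum_squares_ge_zero[of "a - b" 0]
    by (simp add: power2_eq_square algebra_simps)
  have "a * k * b = k * (a * b)" by simp
  also have "\<dots> \<le> k' * (a * b)" using assms by (simp add: mult_right_mono)
  also have "\<dots> \<le> k' * ((a\<^sup>2 + b\<^sup>2) / 2)"
    using \<open>a * b \<le> _\<close> assms by (intro mult_left_mono) auto
  finally show ?thesis by simp
qed

lemma sum_if_const:
  assumes "finite V"
  shows "(\<Sum>w'\<in>V. if P w' then (x::real) else 0) = real (card {w'\<in>V. P w'}) * x"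
  using sum.inter_filter[OF assms, of "\<lambda>_. x" P] by simp

lemma local_kb1:
  fixes K :: "'h::finite kernel"
  assumes loc: "local_on I K" and fI: "finite I"
  shows "\<exists>r\<ge>0. kb1 r K"
proof -
  define S where "S = (Pi\<^sub>E I (\<lambda>_. UNIV) :: (int \<Rightarrow> 'h) set)"
  have fS: "finite S" unfolding S_def by (rule finite_PiE[OF fI]) simp
  define C where "C = (\<Sum>p\<in>S\<times>S. cmod (K (fst p) (snd p)))"
  define E where "E w w' \<longleftrightarrow> (\<forall>i. i \<notin> I \<longrightarrow> w i = w' i)" for w w' :: "int \<Rightarrow> 'h"
  have C0: "C \<ge> 0" unfolding C_def by (simp add: sum_nonneg)
  have KC: "cmod (K w w') \<le> (if E w w' then C else 0)" for w w'
  proof (cases "E w w'")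
    case False
    then have "K w w' = 0" using loc unfolding local_on_def E_def by blast
    then show ?thesis using False by simp
  next
    case True
    have hh: "(\<forall>i\<in>I. w i = restrict w I i \<and> w' i = restrict w' I i) \<and>
          (\<forall>i. i \<notin> I \<longrightarrow> w i = w' i \<and> restrict w I i = restrict w' I i)"
      using True by (auto simp: E_def)
    have L2: "\<forall>w w' v v'. (\<forall>i\<in>I. w i = v i \<and> w' i = v' i) \<and>
                   (\<forall>i. i \<notin> I \<longrightarrow> w i = w' i \<and> v i = v' i)
                   \<longrightarrow> K w w' = K v v'"
      using loc unfolding local_on_def by (rule conjunct2)
    have eq: "K w w' = K (restrict w I) (restrict w' I)"
      by (rule L2[rule_format, OF hh])
    have "(restrict w I, restrict w' I) \<in> S \<times> S" by (simp add: S_def)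
    then have "cmod (K (restrict w I) (restrict w' I)) \<le> C" unfolding C_def
      using member_le_sum[of "(restrict w I, restrict w' I)" "S\<times>S" "\<lambda>p. cmod (K (fst p) (snd p))"] fS
      by auto
    then show ?thesis using True eq by simp
  qed
  define N where "N = card S"
  have cardE: "card {w'\<in>V. E w w'} \<le> N" for V w
  proof -
    have "inj_on (\<lambda>w'. restrict w' I) {w'\<in>V. E w w'}"
    proof (rule inj_onI)
      fix x y assume x: "x \<in> {w'\<in>V. E w w'}" and y: "y \<in> {w'\<in>V. E w w'}"
        and eq: "restrict x I = restrict y I"
      show "x = y"
      proof (rule ext)
        fix i show "x i = y i"
        proof (cases "i \<in> I")
          case True then show ?thesis using fun_cong[OF eq, of i] by simp
        next
          case False then show ?thesis using x y by (auto simp: E_def)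
        qed
      qed
    qed
    moreover have "(\<lambda>w'. restrict w' I) ` {w'\<in>V. E w w'} \<subseteq> S" by (auto simp: S_def)
    ultimately show ?thesis unfolding N_def using card_inj_on_le fS by blast
  qed
  have Esym: "E w w' = E w' w" for w w' by (auto simp: E_def)
  have "kb1 (C * real N) K"
    unfolding kb1_def
  proof (intro allI impI)
    fix u v :: "(int \<Rightarrow> 'h) \<Rightarrow> complex"
    assume fu: "fin_vec u" and fv: "fin_vec v" and nu: "vnorm u \<le> 1" and nv: "vnorm v \<le> 1"
    define U where "U = {w. u w \<noteq> 0}"
    define V where "V = {w. v w \<noteq> 0}"
    have fU: "finite U" and fV: "finite V" using fu fv by (auto simp: fin_vec_def U_def V_def)
    have su: "(\<Sum>w\<in>U. (cmod (u w))\<^sup>2) \<le> 1"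
      using nu vnorm_sq[of u] vnorm_nonneg[of u] unfolding U_def
      by (metis power_le_one)
    have sv: "(\<Sum>w\<in>V. (cmod (v w))\<^sup>2) \<le> 1"
      using nv vnorm_sq[of v] vnorm_nonneg[of v] unfolding V_def
      by (metis power_le_one)
    have "cmod (kform u K v) \<le> (\<Sum>w\<in>U. cmod (\<Sum>w'\<in>V. cnj (u w) * K w w' * v w'))"
      unfolding kform_def U_def V_def by (rule norm_sum)
    also have "\<dots> \<le> (\<Sum>w\<in>U. \<Sum>w'\<in>V. cmod (u w) * cmod (K w w') * cmod (v w'))"
      by (rule sum_mono, rule order_trans[OF norm_sum], rule sum_mono) (simp add: norm_mult)
    also have "\<dots> \<le> (\<Sum>w\<in>U. \<Sum>w'\<in>V. (if E w w' then C else 0) * ((cmod (u w))\<^sup>2 + (cmod (v w'))\<^sup>2) / 2)"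
      by (intro sum_mono amgm_aux KC) auto
    also have "\<dots> = (\<Sum>w\<in>U. \<Sum>w'\<in>V. C / 2 * ((if E w w' then (cmod (u w))\<^sup>2 else 0) + (if E w w' then (cmod (v w'))\<^sup>2 else 0)))"
      by (intro sum.cong refl) auto
    also have "\<dots> = C / 2 * (\<Sum>w\<in>U. \<Sum>w'\<in>V. (if E w w' then (cmod (u w))\<^sup>2 else 0) + (if E w w' then (cmod (v w'))\<^sup>2 else 0))"
      by (simp add: sum_distrib_left)
    also have "\<dots> = C / 2 * ((\<Sum>w\<in>U. \<Sum>w'\<in>V. if E w w' then (cmod (u w))\<^sup>2 else 0)
                          + (\<Sum>w\<in>U. \<Sum>w'\<in>V. if E w w' then (cmod (v w'))\<^sup>2 else 0))"
      by (simp add: sum.distrib)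
    finally have main: "cmod (kform u K v) \<le> C / 2 * ((\<Sum>w\<in>U. \<Sum>w'\<in>V. if E w w' then (cmod (u w))\<^sup>2 else 0)
                          + (\<Sum>w\<in>U. \<Sum>w'\<in>V. if E w w' then (cmod (v w'))\<^sup>2 else 0))" .
    have X: "(\<Sum>w\<in>U. \<Sum>w'\<in>V. if E w w' then (cmod (u w))\<^sup>2 else 0) \<le> real N"
    proof -
      have "(\<Sum>w\<in>U. \<Sum>w'\<in>V. if E w w' then (cmod (u w))\<^sup>2 else 0)
          = (\<Sum>w\<in>U. real (card {w'\<in>V. E w w'}) * (cmod (u w))\<^sup>2)"
        using sum_if_const[OF fV] by simp
      also have "\<dots> \<le> (\<Sum>w\<in>U. real N * (cmod (u w))\<^sup>2)"
        by (intro sum_mono mult_right_mono) (auto simp: cardE)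
      also have "\<dots> \<le> real N"
        using su by (simp add: sum_distrib_left[symmetric] mult_left_le)
      finally show ?thesis .
    qed
    have Y: "(\<Sum>w\<in>U. \<Sum>w'\<in>V. if E w w' then (cmod (v w'))\<^sup>2 else 0) \<le> real N"
    proof -
      have "(\<Sum>w\<in>U. \<Sum>w'\<in>V. if E w w' then (cmod (v w'))\<^sup>2 else 0)
          = (\<Sum>w'\<in>V. \<Sum>w\<in>U. if E w' w then (cmod (v w'))\<^sup>2 else 0)"
        by (subst sum.swap) (simp add: Esym)
      also have "\<dots> = (\<Sum>w'\<in>V. real (card {w\<in>U. E w' w}) * (cmod (v w'))\<^sup>2)"
        using sum_if_const[OF fU] by simp
      also have "\<dots> \<le> (\<Sum>w'\<in>V. real N * (cmod (v w'))\<^sup>2)"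
        by (intro sum_mono mult_right_mono) (auto simp: cardE)
      also have "\<dots> \<le> real N"
        using sv by (simp add: sum_distrib_left[symmetric] mult_left_le)
      finally show ?thesis .
    qed
    have "C / 2 * ((\<Sum>w\<in>U. \<Sum>w'\<in>V. if E w w' then (cmod (u w))\<^sup>2 else 0)
                          + (\<Sum>w\<in>U. \<Sum>w'\<in>V. if E w w' then (cmod (v w'))\<^sup>2 else 0)) \<le> C / 2 * (real N + real N)"
      using X Y C0 by (intro mult_left_mono) auto
    then show "cmod (kform u K v) \<le> C * real N"
      using main by simp
  qed
  then show ?thesis using C0 by (intro exI[of _ "C * real N"]) auto
qed

lemma local_onI:
  assumes "\<And>w w' i. i \<notin> I \<Longrightarrow> w i \<noteq> w' i \<Longrightarrow> K w w' = 0"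
    and "\<And>w w' v v'. (\<forall>i\<in>I. w i = v i \<and> w' i = v' i) \<Longrightarrow> (\<forall>i. i \<notin> I \<longrightarrow> w i = w' i \<and> v i = v' i) \<Longrightarrow> K w w' = K v v'"
  shows "local_on I K"
  unfolding local_on_def
proof (intro conjI allI impI)
  fix w w' :: "int \<Rightarrow> 'a" assume "\<exists>i. i \<notin> I \<and> w i \<noteq> w' i"
  then obtain i where "i \<notin> I" "w i \<noteq> w' i" by blast
  then show "K w w' = 0" by (rule assms(1))
next
  fix w w' v v' :: "int \<Rightarrow> 'a"
  assume "(\<forall>i\<in>I. w i = v i \<and> w' i = v' i) \<and> (\<forall>i. i \<notin> I \<longrightarrow> w i = w' i \<and> v i = v' i)"
  then show "K w w' = K v v'" using assms(2) by blast
qed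

lemma local_onD1: "local_on I K \<Longrightarrow> i \<notin> I \<Longrightarrow> w i \<noteq> w' i \<Longrightarrow> K w w' = 0"
  unfolding local_on_def by blast

lemma local_onD2: "local_on I K \<Longrightarrow> (\<forall>i\<in>I. w i = v i \<and> w' i = v' i) \<Longrightarrow> (\<forall>i. i \<notin> I \<longrightarrow> w i = w' i \<and> v i = v' i) \<Longrightarrow> K w w' = K v v'"
  unfolding local_on_def by blast

lemma local_on_mono:
  assumes loc: "local_on I K" and IJ: "I \<subseteq> J" shows "local_on J K"
proof (rule local_onI)
  fix w w' :: "int \<Rightarrow> 'a" and i assume "i \<notin> J" "w i \<noteq> w' i"
  then show "K w w' = 0" using IJ local_onD1[OF loc, of i w w'] by blast
next
  fix w w' v v' :: "int \<Rightarrow> 'a"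
  assume h1: "\<forall>i\<in>J. w i = v i \<and> w' i = v' i" and h2: "\<forall>i. i \<notin> J \<longrightarrow> w i = w' i \<and> v i = v' i"
  show "K w w' = K v v'"
  proof (cases "\<exists>i. i \<notin> I \<and> w i \<noteq> w' i")
    case True
    then obtain i where i: "i \<notin> I" "w i \<noteq> w' i" by blast
    then have "i \<in> J" using h2 by blast
    then have "v i \<noteq> v' i" using h1 i(2) by auto
    then have "K v v' = 0" "K w w' = 0" using local_onD1[OF loc i(1)] i(2) by auto
    then show ?thesis by simp
  next
    case False
    have a: "\<forall>i\<in>I. w i = v i \<and> w' i = v' i" using h1 IJ by blast
    have b: "\<forall>i. i \<notin> I \<longrightarrow> w i = w' i \<and> v i = v' i"
    proof (intro allI impI conjI)
      fix i assume "i \<notin> I"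
      then show "w i = w' i" using False by blast
      then show "v i = v' i" using h1 h2 by (cases "i \<in> J") auto
    qed
    show ?thesis by (rule local_onD2[OF loc a b])
  qed
qed

lemma local_on_kadd:
  assumes a: "local_on I K" and b: "local_on I L" shows "local_on I (kadd K L)"
proof (rule local_onI)
  fix w w' :: "int \<Rightarrow> 'a" and i assume "i \<notin> I" "w i \<noteq> w' i"
  then show "kadd K L w w' = 0" using local_onD1[OF a] local_onD1[OF b] by (simp add: kadd_def)
next
  fix w w' v v' :: "int \<Rightarrow> 'a"
  assume h1: "\<forall>i\<in>I. w i = v i \<and> w' i = v' i" and h2: "\<forall>i. i \<notin> I \<longrightarrow> w i = w' i \<and> v i = v' i"
  show "kadd K L w w' = kadd K L v v'"
    using local_onD2[OF a h1 h2] local_onD2[OF b h1 h2] by (simp add: kadd_def)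
qed

lemma local_on_kscale:
  assumes a: "local_on I K" shows "local_on I (kscale c K)"
proof (rule local_onI)
  fix w w' :: "int \<Rightarrow> 'a" and i assume "i \<notin> I" "w i \<noteq> w' i"
  then show "kscale c K w w' = 0" using local_onD1[OF a] by (simp add: kscale_def)
next
  fix w w' v v' :: "int \<Rightarrow> 'a"
  assume h1: "\<forall>i\<in>I. w i = v i \<and> w' i = v' i" and h2: "\<forall>i. i \<notin> I \<longrightarrow> w i = w' i \<and> v i = v' i"
  show "kscale c K w w' = kscale c K v v'"
    using local_onD2[OF a h1 h2] by (simp add: kscale_def)
qed

lemma local_on_kminus:
  assumes a: "local_on I K" and b: "local_on I L" shows "local_on I (kminus K L)"
proof (rule local_onI)
  fix w w' :: "int \<Rightarrow> 'a" and i assume "i \<notin> I" "w i \<noteq> w' i"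
  then show "kminus K L w w' = 0" using local_onD1[OF a] local_onD1[OF b] by (simp add: kminus_def)
next
  fix w w' v v' :: "int \<Rightarrow> 'a"
  assume h1: "\<forall>i\<in>I. w i = v i \<and> w' i = v' i" and h2: "\<forall>i. i \<notin> I \<longrightarrow> w i = w' i \<and> v i = v' i"
  show "kminus K L w w' = kminus K L v v'"
    using local_onD2[OF a h1 h2] local_onD2[OF b h1 h2] by (simp add: kminus_def)
qed

lemma local_on_kct:
  assumes a: "local_on I K" shows "local_on I (kct K)"
proof (rule local_onI)
  fix w w' :: "int \<Rightarrow> 'a" and i assume i: "i \<notin> I" "w i \<noteq> w' i"
  then have "w' i \<noteq> w i" by simp
  then have "K w' w = 0" by (rule local_onD1[OF a i(1)])
  then show "kct K w w' = 0" by (simp add: kct_def)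
next
  fix w w' v v' :: "int \<Rightarrow> 'a"
  assume h1: "\<forall>i\<in>I. w i = v i \<and> w' i = v' i" and h2: "\<forall>i. i \<notin> I \<longrightarrow> w i = w' i \<and> v i = v' i"
  have h1': "\<forall>i\<in>I. w' i = v' i \<and> w i = v i" using h1 by blast
  have h2': "\<forall>i. i \<notin> I \<longrightarrow> w' i = w i \<and> v' i = v i" using h2 by simp
  show "kct K w w' = kct K v v'"
    using local_onD2[OF a h1' h2'] by (simp add: kct_def)
qed

lemma local_on_kone: "local_on I kone"
proof (rule local_onI)
  fix w w' :: "int \<Rightarrow> 'a" and i assume "i \<notin> I" "w i \<noteq> w' i"
  then have "w \<noteq> w'" by blast
  then show "kone w w' = 0" by (simp add: kone_def)
next
  fix w w' v v' :: "int \<Rightarrow> 'a"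
  assume h1: "\<forall>i\<in>I. w i = v i \<and> w' i = v' i" and h2: "\<forall>i. i \<notin> I \<longrightarrow> w i = w' i \<and> v i = v' i"
  have "(\<forall>i. w i = w' i) \<longleftrightarrow> (\<forall>i. v i = v' i)"
  proof
    assume w: "\<forall>i. w i = w' i" show "\<forall>i. v i = v' i"
    proof fix i show "v i = v' i" using h1 h2 w by (cases "i \<in> I") auto qed
  next
    assume v: "\<forall>i. v i = v' i" show "\<forall>i. w i = w' i"
    proof fix i show "w i = w' i" using h1 h2 v by (cases "i \<in> I") auto qed
  qed
  then have "w = w' \<longleftrightarrow> v = v'" by (simp add: fun_eq_iff)
  then show "kone w w' = kone v v'" by (simp add: kone_def)
qed

lemma local_elem_iff_fin: "local_elem K \<Longrightarrow> \<exists>n m. local_on {n..m} K"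
  by (simp add: local_elem_def)

lemma local_elem_join:
  assumes "local_elem K" "local_elem L"
  shows "\<exists>n m. local_on {n..m} K \<and> local_on {n..m} L"
proof -
  obtain n m where k: "local_on {n..m} K" using assms(1) unfolding local_elem_def by blast
  obtain n' m' where l: "local_on {n'..m'} L" using assms(2) unfolding local_elem_def by blast
  have "local_on {min n n'..max m m'} K" by (rule local_on_mono[OF k]) auto
  moreover have "local_on {min n n'..max m m'} L" by (rule local_on_mono[OF l]) auto
  ultimately show ?thesis by blast
qed

lemma local_elem_kadd: assumes "local_elem K" "local_elem L" shows "local_elem (kadd K L)"
proof -
  obtain n m where "local_on {n..m} K" "local_on {n..m} L" using local_elem_join[OF assms] by blast
  then have "local_on {n..m} (kadd K L)" by (rule local_on_kadd)
  then show ?thesis unfolding local_elem_def by blast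
qed

lemma local_elem_kminus: assumes "local_elem K" "local_elem L" shows "local_elem (kminus K L)"
proof -
  obtain n m where "local_on {n..m} K" "local_on {n..m} L" using local_elem_join[OF assms] by blast
  then have "local_on {n..m} (kminus K L)" by (rule local_on_kminus)
  then show ?thesis unfolding local_elem_def by blast
qed

lemma local_elem_kscale: assumes "local_elem K" shows "local_elem (kscale c K)"
proof -
  obtain n m where "local_on {n..m} K" using assms unfolding local_elem_def by blast
  then have "local_on {n..m} (kscale c K)" by (rule local_on_kscale)
  then show ?thesis unfolding local_elem_def by blast
qed

lemma local_elem_kct: assumes "local_elem K" shows "local_elem (kct K)"
proof -
  obtain n m where "local_on {n..m} K" using assms unfolding local_elem_def by blast
  then have "local_on {n..m} (kct K)" by (rule local_on_kct)
  then show ?thesis unfolding local_elem_def by blast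
qed

lemma local_elem_kone: "local_elem kone"
  unfolding local_elem_def using local_on_kone by blast

lemma local_elem_kb1: assumes "local_elem (K :: 'h::finite kernel)" shows "\<exists>r\<ge>0. kb1 r K"
proof -
  obtain n m where "local_on {n..m} K" using assms unfolding local_elem_def by blast
  then show ?thesis using local_kb1 finite_atLeastAtMost_int by blast
qed

lemma zero_vec: "fin_vec (\<lambda>_. 0)" "vnorm (\<lambda>_. 0) = 0"
  by (auto simp: fin_vec_def vnorm_def)

lemma knorm_ge:
  assumes "local_elem (K :: 'h::finite kernel)" "fin_vec u" "fin_vec v" "vnorm u \<le> 1" "vnorm v \<le> 1"
  shows "cmod (kform u K v) \<le> knorm K"
proof -
  obtain r where r: "kb1 r K" using local_elem_kb1[OF assms(1)] by blast
  let ?A = "{(u, v). fin_vec u \<and> fin_vec v \<and> vnorm u \<le> 1 \<and> vnorm v \<le> 1}"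
  have "bdd_above ((\<lambda>p. cmod (kform (fst p) K (snd p))) ` ?A)"
    using r unfolding kb1_def bdd_above_def by auto
  moreover have "(u, v) \<in> ?A" using assms by auto
  ultimately have "cmod (kform (fst (u, v)) K (snd (u, v))) \<le> (SUP p\<in>?A. cmod (kform (fst p) K (snd p)))"
    by (intro cSUP_upper) auto
  then show ?thesis unfolding knorm_def by simp
qed

lemma knorm_le:
  fixes K :: "'h kernel"
  assumes "\<And>u v. fin_vec u \<Longrightarrow> fin_vec v \<Longrightarrow> vnorm u \<le> 1 \<Longrightarrow> vnorm v \<le> 1 \<Longrightarrow> cmod (kform u K v) \<le> c"
  shows "knorm K \<le> c"
proof -
  let ?A = "{(u, v). fin_vec u \<and> fin_vec v \<and> vnorm u \<le> 1 \<and> vnorm v \<le> 1} :: (((int \<Rightarrow> 'h) \<Rightarrow> complex) \<times> ((int \<Rightarrow> 'h) \<Rightarrow> complex)) set"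
  have mem: "(\<lambda>_. 0, \<lambda>_. 0) \<in> ?A" by (simp add: zero_vec)
  have ne: "?A \<noteq> {}"
  proof
    assume e: "?A = {}" show False using mem unfolding e by simp
  qed
  have le: "cmod (kform (fst p) K (snd p)) \<le> c" if "p \<in> ?A" for p
  proof -
    obtain u v where p: "p = (u, v)" by (cases p)
    then have "fin_vec u" "fin_vec v" "vnorm u \<le> 1" "vnorm v \<le> 1" using that by auto
    then have "cmod (kform u K v) \<le> c" by (rule assms)
    then show ?thesis using p by simp
  qed
  show ?thesis unfolding knorm_def by (rule cSUP_least[OF ne le])
qed

lemma knorm_nonneg: "local_elem (K :: 'h::finite kernel) \<Longrightarrow> 0 \<le> knorm K"
  using knorm_ge[of K "\<lambda>_. 0" "\<lambda>_. 0"] by (simp add: zero_vec kform_def)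

lemma kminus_kadd: "kminus (kadd A B) (kadd C D) = kadd (kminus A C) (kminus B D)"
  by (simp add: kminus_def kadd_def fun_eq_iff)

lemma kminus_kscale: "kminus (kscale c A) (kscale c B) = kscale c (kminus A B)"
  by (simp add: kminus_def kscale_def fun_eq_iff algebra_simps)

lemma kminus_kct: "kminus (kct A) (kct B) = kct (kminus A B)"
  by (simp add: kminus_def kct_def fun_eq_iff)

lemma kform_tendsto:
  assumes "\<And>w w'. (\<lambda>n. F n w w') \<longlonglongrightarrow> G w w'"
  shows "(\<lambda>n. kform u (F n) v) \<longlonglongrightarrow> kform u G v"
  unfolding kform_def by (intro tendsto_intros assms)

lemma ql_local: assumes "local_elem (K :: 'h::finite kernel)" shows "K \<in> quasi_local"
proof -
  have "knorm (kminus K K) \<le> 0"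
    by (rule knorm_le) (simp add: kform_kminus)
  then show ?thesis unfolding quasi_local_def using assms
    by (intro CollectI exI[of _ "\<lambda>_. K"]) auto
qed

lemma ql_kadd:
  assumes "K \<in> quasi_local" "(L :: 'h::finite kernel) \<in> quasi_local"
  shows "kadd K L \<in> quasi_local"
proof -
  obtain b where b: "\<forall>n. local_elem (b n)" "\<forall>e>0. \<exists>N. \<forall>p\<ge>N. \<forall>q\<ge>N. knorm (kminus (b p) (b q)) < e"
     "\<forall>w w'. (\<lambda>n. b n w w') \<longlonglongrightarrow> K w w'"
    using assms(1) unfolding quasi_local_def by blast
  obtain c where c: "\<forall>n. local_elem (c n)" "\<forall>e>0. \<exists>N. \<forall>p\<ge>N. \<forall>q\<ge>N. knorm (kminus (c p) (c q)) < e"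
     "\<forall>w w'. (\<lambda>n. c n w w') \<longlonglongrightarrow> L w w'"
    using assms(2) unfolding quasi_local_def by blast
  have "\<exists>N. \<forall>p\<ge>N. \<forall>q\<ge>N. knorm (kminus (kadd (b p) (c p)) (kadd (b q) (c q))) < e" if e: "e > 0" for e
  proof -
    have e2: "e/2 > 0" using e by simp
    obtain N1 where N1: "\<forall>p\<ge>N1. \<forall>q\<ge>N1. knorm (kminus (b p) (b q)) < e/2" using b(2) e2 by blast
    obtain N2 where N2: "\<forall>p\<ge>N2. \<forall>q\<ge>N2. knorm (kminus (c p) (c q)) < e/2" using c(2) e2 by blast
    have "knorm (kminus (kadd (b p) (c p)) (kadd (b q) (c q))) < e" if "p \<ge> max N1 N2" "q \<ge> max N1 N2" for p q
    proof -
      have "knorm (kminus (kadd (b p) (c p)) (kadd (b q) (c q))) \<le> knorm (kminus (b p) (b q)) + knorm (kminus (c p) (c q))"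
        unfolding kminus_kadd
      proof (rule knorm_le)
        fix u v :: "(int \<Rightarrow> 'h) \<Rightarrow> complex" assume "fin_vec u" "fin_vec v" "vnorm u \<le> 1" "vnorm v \<le> 1"
        note uv = this
        have l1: "local_elem (kminus (b p) (b q))" using local_elem_kminus b(1) by blast
        have l2: "local_elem (kminus (c p) (c q))" using local_elem_kminus c(1) by blast
        have "cmod (kform u (kadd (kminus (b p) (b q)) (kminus (c p) (c q))) v)
              \<le> cmod (kform u (kminus (b p) (b q)) v) + cmod (kform u (kminus (c p) (c q)) v)"
          unfolding kform_kadd by (rule norm_triangle_ineq)
        also have "\<dots> \<le> knorm (kminus (b p) (b q)) + knorm (kminus (c p) (c q))"
          by (intro add_mono knorm_ge[OF l1 uv] knorm_ge[OF l2 uv])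
        finally show "cmod (kform u (kadd (kminus (b p) (b q)) (kminus (c p) (c q))) v)
                   \<le> knorm (kminus (b p) (b q)) + knorm (kminus (c p) (c q))" .
      qed
      also have "\<dots> < e"
      proof -
        have "knorm (kminus (b p) (b q)) < e/2" using N1 that by simp
        moreover have "knorm (kminus (c p) (c q)) < e/2" using N2 that by simp
        ultimately show ?thesis by linarith
      qed
      finally show ?thesis .
    qed
    then show ?thesis by blast
  qed
  moreover have "\<forall>w w'. (\<lambda>n. kadd (b n) (c n) w w') \<longlonglongrightarrow> kadd K L w w'"
    using b(3) c(3) by (simp add: kadd_def tendsto_add)
  moreover have "\<forall>n. local_elem (kadd (b n) (c n))" using b(1) c(1) local_elem_kadd by blast
  ultimately show ?thesis unfolding quasi_local_def by (intro CollectI exI[of _ "\<lambda>n. kadd (b n) (c n)"] conjI) blast+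
qed

lemma ql_kscale:
  assumes "(K :: 'h::finite kernel) \<in> quasi_local"
  shows "kscale a K \<in> quasi_local"
proof -
  obtain b where b: "\<forall>n. local_elem (b n)" "\<forall>e>0. \<exists>N. \<forall>p\<ge>N. \<forall>q\<ge>N. knorm (kminus (b p) (b q)) < e"
     "\<forall>w w'. (\<lambda>n. b n w w') \<longlonglongrightarrow> K w w'"
    using assms(1) unfolding quasi_local_def by blast
  have "\<exists>N. \<forall>p\<ge>N. \<forall>q\<ge>N. knorm (kminus (kscale a (b p)) (kscale a (b q))) < e" if e: "e > 0" for e
  proof -
    have a1: "cmod a + 1 > 0" using norm_ge_zero[of a] by linarith
    have e': "e / (cmod a + 1) > 0" using e a1 by (rule divide_pos_pos)
    obtain N where N: "\<forall>p\<ge>N. \<forall>q\<ge>N. knorm (kminus (b p) (b q)) < e / (cmod a + 1)" using b(2) e' by blast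
    have "knorm (kminus (kscale a (b p)) (kscale a (b q))) < e" if "p \<ge> N" "q \<ge> N" for p q
    proof -
      have le: "local_elem (kminus (b p) (b q))" using b(1) local_elem_kminus by blast
      have "knorm (kminus (kscale a (b p)) (kscale a (b q))) \<le> (cmod a + 1) * knorm (kminus (b p) (b q))"
        unfolding kminus_kscale
      proof (rule knorm_le)
        fix u v :: "(int \<Rightarrow> 'h) \<Rightarrow> complex" assume uv: "fin_vec u" "fin_vec v" "vnorm u \<le> 1" "vnorm v \<le> 1"
        have "cmod (kform u (kscale a (kminus (b p) (b q))) v) = cmod a * cmod (kform u (kminus (b p) (b q)) v)"
          by (simp add: kform_kscale norm_mult)
        also have "\<dots> \<le> (cmod a + 1) * knorm (kminus (b p) (b q))"
          using knorm_ge[OF le uv] knorm_nonneg[OF le]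
          by (intro mult_mono) auto
        finally show "cmod (kform u (kscale a (kminus (b p) (b q))) v) \<le> (cmod a + 1) * knorm (kminus (b p) (b q))" .
      qed
      also have "\<dots> < (cmod a + 1) * (e / (cmod a + 1))"
        using N that a1 by (intro mult_strict_left_mono) auto
      also have "\<dots> = e" using a1 by simp
      finally show ?thesis .
    qed
    then show ?thesis by blast
  qed
  moreover have "\<forall>w w'. (\<lambda>n. kscale a (b n) w w') \<longlonglongrightarrow> kscale a K w w'"
    using b(3) by (simp add: kscale_def tendsto_mult_left)
  moreover have "\<forall>n. local_elem (kscale a (b n))" using b(1) local_elem_kscale by blast
  ultimately show ?thesis unfolding quasi_local_def by (intro CollectI exI[of _ "\<lambda>n. kscale a (b n)"] conjI) blast+
qed

lemma ql_kct:
  assumes "(K :: 'h::finite kernel) \<in> quasi_local"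
  shows "kct K \<in> quasi_local"
proof -
  obtain b where b: "\<forall>n. local_elem (b n)" "\<forall>e>0. \<exists>N. \<forall>p\<ge>N. \<forall>q\<ge>N. knorm (kminus (b p) (b q)) < e"
     "\<forall>w w'. (\<lambda>n. b n w w') \<longlonglongrightarrow> K w w'"
    using assms(1) unfolding quasi_local_def by blast
  have "knorm (kminus (kct (b p)) (kct (b q))) \<le> knorm (kminus (b p) (b q))" for p q
    unfolding kminus_kct
  proof (rule knorm_le)
    fix u v :: "(int \<Rightarrow> 'h) \<Rightarrow> complex" assume uv: "fin_vec u" "fin_vec v" "vnorm u \<le> 1" "vnorm v \<le> 1"
    have le: "local_elem (kminus (b p) (b q))" using b(1) local_elem_kminus by blast
    show "cmod (kform u (kct (kminus (b p) (b q))) v) \<le> knorm (kminus (b p) (b q))"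
      unfolding kform_kct complex_mod_cnj using knorm_ge[OF le] uv by blast
  qed
  then have "\<exists>N. \<forall>p\<ge>N. \<forall>q\<ge>N. knorm (kminus (kct (b p)) (kct (b q))) < e" if e: "e > 0" for e
    using b(2) e by (meson le_less_trans)
  moreover have "\<forall>w w'. (\<lambda>n. kct (b n) w w') \<longlonglongrightarrow> kct K w w'"
    using b(3) by (simp add: kct_def tendsto_cnj)
  moreover have "\<forall>n. local_elem (kct (b n))" using b(1) local_elem_kct by blast
  ultimately show ?thesis unfolding quasi_local_def by (intro CollectI exI[of _ "\<lambda>n. kct (b n)"] conjI) blast+
qed

lemma ql_approx:
  assumes "(K :: 'h::finite kernel) \<in> quasi_local" "e > 0"
  shows "\<exists>p. local_elem p \<and> kb e (kminus K p)"
proof -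
  obtain b where b: "\<forall>n. local_elem (b n)" "\<forall>e>0. \<exists>N. \<forall>p\<ge>N. \<forall>q\<ge>N. knorm (kminus (b p) (b q)) < e"
     "\<forall>w w'. (\<lambda>n. b n w w') \<longlonglongrightarrow> K w w'"
    using assms(1) unfolding quasi_local_def by blast
  obtain N where N: "\<forall>p\<ge>N. \<forall>q\<ge>N. knorm (kminus (b p) (b q)) < e" using b(2) assms(2) by blast
  have "kb1 e (kminus K (b N))"
    unfolding kb1_def
  proof (intro allI impI)
    fix u v :: "(int \<Rightarrow> 'h) \<Rightarrow> complex" assume uv: "fin_vec u" "fin_vec v" "vnorm u \<le> 1" "vnorm v \<le> 1"
    have lim: "(\<lambda>q. cmod (kform u (kminus (b q) (b N)) v)) \<longlonglongrightarrow> cmod (kform u (kminus K (b N)) v)"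
      by (intro tendsto_norm kform_tendsto) (use b(3) in \<open>simp add: kminus_def tendsto_diff\<close>)
    have "cmod (kform u (kminus (b q) (b N)) v) \<le> e" if q: "q \<ge> N" for q
    proof -
      have l: "local_elem (kminus (b q) (b N))" using local_elem_kminus b(1) by blast
      have "cmod (kform u (kminus (b q) (b N)) v) \<le> knorm (kminus (b q) (b N))" by (rule knorm_ge[OF l uv])
      also have "\<dots> < e" using N q by blast
      finally show ?thesis by simp
    qed
    then show "cmod (kform u (kminus K (b N)) v) \<le> e"
      using LIMSEQ_le_const2[OF lim] by blast
  qed
  then show ?thesis using b(1) kb1_kb by blast
qed

lemma kb_kadd: assumes "kb r K" "kb s L" shows "kb (r + s) (kadd K L)"
  unfolding kb_def
proof (intro allI impI)
  fix u v :: "(int \<Rightarrow> 'a) \<Rightarrow> complex" assume uv: "fin_vec u" "fin_vec v"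
  have "cmod (kform u (kadd K L) v) \<le> cmod (kform u K v) + cmod (kform u L v)"
    unfolding kform_kadd by (rule norm_triangle_ineq)
  also have "\<dots> \<le> r * vnorm u * vnorm v + s * vnorm u * vnorm v"
    using assms uv unfolding kb_def by (intro add_mono) auto
  also have "\<dots> = (r + s) * vnorm u * vnorm v" by (simp add: algebra_simps)
  finally show "cmod (kform u (kadd K L) v) \<le> (r + s) * vnorm u * vnorm v" .
qed

lemma kb_kscale: "kb r K \<Longrightarrow> kb (cmod c * r) (kscale c K)"
  unfolding kb_def kform_kscale norm_mult
  by (simp add: mult.assoc mult_left_mono)

lemma kb_kct: assumes a: "kb r K" shows "kb r (kct K)"
  unfolding kb_def kform_kct complex_mod_cnj
proof (intro allI impI)
  fix u v :: "(int \<Rightarrow> 'a) \<Rightarrow> complex" assume fu: "fin_vec u" and fv: "fin_vec v"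
  have "cmod (kform v K u) \<le> r * vnorm v * vnorm u" using a fv fu unfolding kb_def by blast
  then show "cmod (kform v K u) \<le> r * vnorm u * vnorm v" by (simp add: mult_ac)
qed

lemma ql_kb: assumes "(K :: 'h::finite kernel) \<in> quasi_local" shows "\<exists>r. kb r K"
proof -
  obtain p where p: "local_elem p" "kb 1 (kminus K p)" using ql_approx[OF assms, of 1] by auto
  obtain r where "kb1 r p" using local_elem_kb1[OF p(1)] by blast
  then have "kb r p" by (rule kb1_kb)
  then have "kb (1 + r) (kadd (kminus K p) p)" using p(2) kb_kadd by blast
  moreover have "kadd (kminus K p) p = K" by (simp add: kadd_def kminus_def fun_eq_iff)
  ultimately show ?thesis by auto
qed

lemma kone_ql: "(kone :: 'h::finite kernel) \<in> quasi_local"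
  by (rule ql_local[OF local_elem_kone])

lemma sa_real: assumes "kct h = h" shows "Im (kform u h u) = 0"
proof -
  have "kform u h u = cnj (kform u h u)" using kform_kct[of u h u] assms by simp
  then have "Im (kform u h u) = Im (cnj (kform u h u))" by simp
  then show ?thesis by simp
qed

lemma kb_form_diag: assumes "kb r h" "fin_vec u" shows "\<bar>Re (kform u h u)\<bar> \<le> r * (vnorm u)^2"
proof -
  have "\<bar>Re (kform u h u)\<bar> \<le> cmod (kform u h u)" by (rule abs_Re_le_cmod)
  also have "\<dots> \<le> r * vnorm u * vnorm u" using assms unfolding kb_def by blast
  finally show ?thesis by (simp add: power2_eq_square mult.assoc)
qed

lemma state_sa:
  fixes h :: "'h::finite kernel"
  assumes st: "is_state \<phi>" and hq: "h \<in> quasi_local" and sa: "kct h = h" and hb: "kb r h"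
  shows "cmod (\<phi> h) \<le> r"
proof -
  have lin_add: "\<phi> (kadd K L) = \<phi> K + \<phi> L" if "K \<in> quasi_local" "L \<in> quasi_local" for K L
    using st that unfolding is_state_def by blast
  have lin_sc: "\<phi> (kscale c K) = c * \<phi> K" if "K \<in> quasi_local" for c K
    using st that unfolding is_state_def by blast
  have pos: "Im (\<phi> K) = 0 \<and> 0 \<le> Re (\<phi> K)" if "K \<in> quasi_local" "kpos K" for K
    using st that unfolding is_state_def by blast
  have one: "\<phi> kone = 1" using st unfolding is_state_def by blast
  define P where "P = kadd (kscale (of_real r) kone) h"
  define M where "M = kadd (kscale (of_real r) kone) (kscale (-1) h)"
  have kq: "kscale (of_real r) (kone :: 'h kernel) \<in> quasi_local" by (rule ql_kscale[OF kone_ql])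
  have mq: "kscale (-1) h \<in> quasi_local" by (rule ql_kscale[OF hq])
  have Pq: "P \<in> quasi_local" unfolding P_def by (rule ql_kadd[OF kq hq])
  have Mq: "M \<in> quasi_local" unfolding M_def by (rule ql_kadd[OF kq mq])
  have "kpos P" unfolding kpos_def
  proof (intro allI impI conjI)
    fix u :: "(int \<Rightarrow> 'h) \<Rightarrow> complex" assume fu: "fin_vec u"
    have e: "kform u P u = of_real (r * (vnorm u)^2) + kform u h u"
      by (simp add: P_def kform_kadd kform_kscale kform_kone[OF fu])
    show "Im (kform u P u) = 0" using e sa_real[OF sa, of u] by simp
    show "0 \<le> Re (kform u P u)" using e kb_form_diag[OF hb fu] by simp
  qed
  have "kpos M" unfolding kpos_def
  proof (intro allI impI conjI)
    fix u :: "(int \<Rightarrow> 'h) \<Rightarrow> complex" assume fu: "fin_vec u"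
    have e: "kform u M u = of_real (r * (vnorm u)^2) - kform u h u"
      by (simp add: M_def kform_kadd kform_kscale kform_kone[OF fu])
    show "Im (kform u M u) = 0" using e sa_real[OF sa, of u] by simp
    show "0 \<le> Re (kform u M u)" using e kb_form_diag[OF hb fu] by simp
  qed
  have eP: "\<phi> P = of_real r + \<phi> h"
    unfolding P_def using lin_add[OF kq hq] lin_sc[OF kone_ql] one by simp
  have eM: "\<phi> M = of_real r - \<phi> h"
    unfolding M_def using lin_add[OF kq mq] lin_sc[OF kone_ql] lin_sc[OF hq] one by simp
  have "Im (\<phi> h) = 0" "0 \<le> r + Re (\<phi> h)" "0 \<le> r - Re (\<phi> h)"
    using pos[OF Pq \<open>kpos P\<close>] pos[OF Mq \<open>kpos M\<close>] eP eM by auto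
  then show ?thesis by (simp add: cmod_eq_Re)
qed

definition ksa1 :: "'h kernel \<Rightarrow> 'h kernel" where
  "ksa1 b = kadd b (kct b)"

definition ksa2 :: "'h kernel \<Rightarrow> 'h kernel" where
  "ksa2 b = kscale \<i> (kadd b (kscale (-1) (kct b)))"

lemma ksa_sa: "kct (ksa1 b) = ksa1 b" "kct (ksa2 b) = ksa2 b"
  by (simp_all add: ksa1_def ksa2_def kct_def kadd_def kscale_def fun_eq_iff algebra_simps)

lemma ksa_decomp: "b = kscale (1/2) (kadd (ksa1 b) (kscale (-\<i>) (ksa2 b)))"
  by (simp add: ksa1_def ksa2_def kct_def kadd_def kscale_def fun_eq_iff algebra_simps)

lemma ksa_ql: "(b :: 'h::finite kernel) \<in> quasi_local \<Longrightarrow> ksa1 b \<in> quasi_local \<and> ksa2 b \<in> quasi_local"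
  by (simp add: ksa1_def ksa2_def ql_kadd ql_kscale ql_kct)

lemma ksa_local: "local_elem b \<Longrightarrow> local_elem (ksa1 b) \<and> local_elem (ksa2 b)"
  by (simp add: ksa1_def ksa2_def local_elem_kadd local_elem_kscale local_elem_kct)

lemma ksa_kb: "kb r b \<Longrightarrow> kb (r + r) (ksa1 b) \<and> kb (r + r) (ksa2 b)"
proof -
  assume bb: "kb r b"
  have "kb (cmod (-1) * r) (kscale (-1) (kct b))" by (rule kb_kscale[OF kb_kct[OF bb]])
  then have "kb r (kscale (-1) (kct b))" by simp
  then have "kb (r + r) (kadd b (kscale (-1) (kct b)))" using kb_kadd bb by blast
  then have "kb (cmod \<i> * (r + r)) (ksa2 b)" unfolding ksa2_def by (rule kb_kscale)
  then show ?thesis using kb_kadd[OF bb kb_kct[OF bb]] by (simp add: ksa1_def)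
qed

lemma state_ksa:
  fixes b :: "'h::finite kernel"
  assumes st: "is_state \<phi>" and bq: "b \<in> quasi_local"
  shows "\<phi> b = (1/2) * (\<phi> (ksa1 b) + (-\<i>) * \<phi> (ksa2 b))"
proof -
  have q: "ksa1 b \<in> quasi_local" "ksa2 b \<in> quasi_local" using ksa_ql[OF bq] by auto
  have q2: "kscale (-\<i>) (ksa2 b) \<in> quasi_local" by (rule ql_kscale[OF q(2)])
  have q3: "kadd (ksa1 b) (kscale (-\<i>) (ksa2 b)) \<in> quasi_local" by (rule ql_kadd[OF q(1) q2])
  have "\<phi> b = \<phi> (kscale (1/2) (kadd (ksa1 b) (kscale (-\<i>) (ksa2 b))))"
    using ksa_decomp[of b] by simp
  also have "\<dots> = (1/2) * (\<phi> (ksa1 b) + (-\<i>) * \<phi> (ksa2 b))"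
    using st q q2 q3 unfolding is_state_def by simp
  finally show ?thesis .
qed

lemma state_bound:
  fixes b :: "'h::finite kernel"
  assumes st: "is_state \<phi>" and bq: "b \<in> quasi_local" and bb: "kb r b"
  shows "cmod (\<phi> b) \<le> 2 * r"
proof -
  have q: "ksa1 b \<in> quasi_local" "ksa2 b \<in> quasi_local" using ksa_ql[OF bq] by auto
  have k: "kb (r + r) (ksa1 b)" "kb (r + r) (ksa2 b)" using ksa_kb[OF bb] by auto
  have s1: "cmod (\<phi> (ksa1 b)) \<le> r + r" by (rule state_sa[OF st q(1) ksa_sa(1) k(1)])
  have s2: "cmod (\<phi> (ksa2 b)) \<le> r + r" by (rule state_sa[OF st q(2) ksa_sa(2) k(2)])
  define X where "X = \<phi> (ksa1 b) + (-\<i>) * \<phi> (ksa2 b)"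
  have e: "\<phi> b = (1/2) * X" unfolding X_def by (rule state_ksa[OF st bq])
  have "cmod (\<phi> b) = cmod (1/2 :: complex) * cmod X" unfolding e by (rule norm_mult)
  then have c1: "cmod (\<phi> b) = (1/2) * cmod X" by simp
  have c2: "cmod X \<le> cmod (\<phi> (ksa1 b)) + cmod ((-\<i>) * \<phi> (ksa2 b))"
    unfolding X_def by (rule norm_triangle_ineq)
  have c3: "cmod ((-\<i>) * \<phi> (ksa2 b)) = cmod (\<phi> (ksa2 b))" by (simp add: norm_mult)
  show ?thesis using c1 c2 c3 s1 s2 by linarith
qed

lemma channel_bound:
  fixes b :: "'h::finite kernel"
  assumes st: "\<And>x. is_state (W x)" and bq: "b \<in> quasi_local"
  shows "\<exists>R. \<forall>x. cmod (W x b) \<le> R"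
proof -
  obtain r where "kb r b" using ql_kb[OF bq] by blast
  then show ?thesis using state_bound[OF st bq] by blast
qed

lemma UC_lin:
  assumes "UC f" "UC g"
  shows "UC (\<lambda>x. a * f x + c * g x)"
  unfolding UC_def
proof (intro allI impI)
  fix e :: real assume e: "e > 0"
  define e1 where "e1 = e / (cmod a + cmod c + 1)"
  have d: "cmod a + cmod c + 1 > 0" using norm_ge_zero[of a] norm_ge_zero[of c] by linarith
  have e1: "e1 > 0" unfolding e1_def using e d by (rule divide_pos_pos)
  obtain n1 where n1: "\<And>x y. agree n1 x y \<Longrightarrow> cmod (f x - f y) \<le> e1" using assms(1) e1 unfolding UC_def by blast
  obtain n2 where n2: "\<And>x y. agree n2 x y \<Longrightarrow> cmod (g x - g y) \<le> e1" using assms(2) e1 unfolding UC_def by blast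
  have "cmod ((a * f x + c * g x) - (a * f y + c * g y)) \<le> e" if "agree (max n1 n2) x y" for x y
  proof -
    have h1: "cmod (f x - f y) \<le> e1" using n1 agree_mono[OF that] by simp
    have h2: "cmod (g x - g y) \<le> e1" using n2 agree_mono[OF that] by simp
    have "cmod ((a * f x + c * g x) - (a * f y + c * g y)) = cmod (a * (f x - f y) + c * (g x - g y))"
      by (simp add: algebra_simps)
    also have "\<dots> \<le> cmod a * cmod (f x - f y) + cmod c * cmod (g x - g y)"
      by (metis norm_mult norm_triangle_ineq)
    also have "\<dots> \<le> cmod a * e1 + cmod c * e1"
      using h1 h2 by (intro add_mono mult_left_mono) auto
    also have "\<dots> = (cmod a + cmod c) * e1" by (simp add: algebra_simps)
    also have "\<dots> \<le> (cmod a + cmod c + 1) * e1" using e1 by simp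
    also have "\<dots> = e" unfolding e1_def using d by simp
    finally show ?thesis .
  qed
  then show "\<exists>n. \<forall>x y. agree n x y \<longrightarrow> cmod (a * f x + c * g x - (a * f y + c * g y)) \<le> e" by blast
qed

lemma dima_local_sa:
  fixes W :: "(int \<Rightarrow> 'a) \<Rightarrow> 'h::finite kernel \<Rightarrow> complex"
  assumes st: "\<And>x. is_state (W x)" and D: "DIMA W" and loc: "local_on {n..m} s" and sa: "kct s = s"
  shows "UC (\<lambda>x. W x s)"
proof -
  obtain r0 where r0: "r0 \<ge> 0" "kb1 r0 s" using local_kb1[OF loc] by auto
  define r where "r = r0 + 1"
  have r: "r > 0" using r0 by (simp add: r_def)
  have kbs: "kb r0 s" by (rule kb1_kb[OF r0(2)])
  have diag: "\<bar>Re (kform u s u)\<bar> \<le> r * (vnorm u)^2" if "fin_vec u" for u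
  proof -
    have "\<bar>Re (kform u s u)\<bar> \<le> r0 * (vnorm u)^2" by (rule kb_form_diag[OF kbs that])
    also have "\<dots> \<le> r * (vnorm u)^2" by (intro mult_right_mono) (auto simp: r_def)
    finally show ?thesis .
  qed
  define k where "k = nat (m - n)"
  have loc': "local_on {n..n + int k} s" by (rule local_on_mono[OF loc]) (auto simp: k_def)
  define Q where "Q = kadd s (kscale (of_real r) kone)"
  define P where "P = kscale (of_real (1/(2*r))) Q"
  have Ploc: "local_on {n..n + int k} P"
    unfolding P_def Q_def by (intro local_on_kscale local_on_kadd loc' local_on_kone)
  have sq: "s \<in> quasi_local" using ql_local loc local_elem_def by blast
  have kq: "kscale (of_real r) (kone :: 'h kernel) \<in> quasi_local" by (rule ql_kscale[OF kone_ql])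
  have Qq: "Q \<in> quasi_local" unfolding Q_def by (rule ql_kadd[OF sq kq])
  have formP: "kform u P u = of_real (1/(2*r)) * (kform u s u + of_real (r * (vnorm u)^2))" if "fin_vec u" for u
    by (simp add: P_def Q_def kform_kadd kform_kscale kform_kone[OF that])
  have "kpos P" unfolding kpos_def
  proof (intro allI impI conjI)
    fix u :: "(int \<Rightarrow> 'h) \<Rightarrow> complex" assume fu: "fin_vec u"
    show "Im (kform u P u) = 0" using formP[OF fu] sa_real[OF sa, of u] by simp
    have "0 \<le> Re (kform u s u) + r * (vnorm u)^2" using diag[OF fu] by linarith
    then show "0 \<le> Re (kform u P u)" using formP[OF fu] r by simp
  qed
  have "kpos (kminus kone P)" unfolding kpos_def
  proof (intro allI impI conjI)
    fix u :: "(int \<Rightarrow> 'h) \<Rightarrow> complex" assume fu: "fin_vec u"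
    have e: "kform u (kminus kone P) u = of_real ((vnorm u)^2) - of_real (1/(2*r)) * (kform u s u + of_real (r * (vnorm u)^2))"
      using formP[OF fu] by (simp add: kform_kminus kform_kone[OF fu])
    show "Im (kform u (kminus kone P) u) = 0" using e sa_real[OF sa, of u] by simp
    have "Re (kform u (kminus kone P) u) = (vnorm u)^2 - (Re (kform u s u) + r * (vnorm u)^2) / (2*r)"
      using e by simp
    also have "\<dots> = (r * (vnorm u)^2 - Re (kform u s u)) / (2*r)"
      using r by (simp add: field_simps)
    also have "\<dots> \<ge> 0" using diag[OF fu] r by (intro divide_nonneg_pos) auto
    finally show "0 \<le> Re (kform u (kminus kone P) u)" .
  qed
  have WP: "W x s = of_real (2*r) * W x P - of_real r" for x
  proof -
    have lin_add: "W x (kadd K L) = W x K + W x L" if "K \<in> quasi_local" "L \<in> quasi_local" for K L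
      using st[of x] that unfolding is_state_def by blast
    have lin_sc: "W x (kscale c K) = c * W x K" if "K \<in> quasi_local" for c K
      using st[of x] that unfolding is_state_def by blast
    have one: "W x kone = 1" using st[of x] unfolding is_state_def by blast
    have "W x P = of_real (1/(2*r)) * (W x s + of_real r)"
      unfolding P_def using lin_sc[OF Qq] lin_add[OF sq kq] lin_sc[OF kone_ql] one
      by (simp add: Q_def)
    then show ?thesis using r by (simp add: field_simps)
  qed
  show ?thesis unfolding UC_def
  proof (intro allI impI)
    fix e :: real assume e: "e > 0"
    have e': "e / (2*r) > 0" using e r by simp
    obtain m0 a0 :: nat where DD: "\<forall>(n::int) (k::nat) b.
        local_on {n..n + int k} b \<and> kpos b \<and> kpos (kminus kone b) \<longrightarrow>
        (\<forall>m a x x'. m \<ge> m0 \<and> a \<ge> a0 \<and>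
            (\<forall>i. n - int m \<le> i \<and> i \<le> n + int k + int a \<longrightarrow> x i = x' i)
            \<longrightarrow> cmod (W x b - W x' b) \<le> e / (2*r))"
      using D e' unfolding DIMA_def by blast
    have DP: "cmod (W x P - W x' P) \<le> e / (2*r)"
      if "\<forall>i. n - int m0 \<le> i \<and> i \<le> n + int k + int a0 \<longrightarrow> x i = x' i" for x x'
      using DD Ploc \<open>kpos P\<close> \<open>kpos (kminus kone P)\<close> that by blast
    define N where "N = nat (max \<bar>n - int m0\<bar> \<bar>n + int k + int a0\<bar>)"
    have "cmod (W x s - W x' s) \<le> e" if "agree N x x'" for x x'
    proof -
      have NN: "int N = max \<bar>n - int m0\<bar> \<bar>n + int k + int a0\<bar>" unfolding N_def by (rule nat_0_le) (simp add: le_max_iff_disj)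
      have "x i = x' i" if i: "n - int m0 \<le> i \<and> i \<le> n + int k + int a0" for i
      proof -
        have "- int N \<le> i \<and> i \<le> int N" using i unfolding NN by arith
        then show ?thesis using \<open>agree N x x'\<close> unfolding agree_def by blast
      qed
      then have "\<forall>i. n - int m0 \<le> i \<and> i \<le> n + int k + int a0 \<longrightarrow> x i = x' i" by blast
      then have h: "cmod (W x P - W x' P) \<le> e / (2*r)" by (rule DP)
      have "W x s - W x' s = of_real (2*r) * (W x P - W x' P)" by (simp only: WP) (simp add: algebra_simps)
      then have "cmod (W x s - W x' s) = 2 * r * cmod (W x P - W x' P)" using r by (simp add: norm_mult)
      also have "\<dots> \<le> 2 * r * (e / (2*r))" using h r by (intro mult_left_mono) auto
      also have "\<dots> = e" using r by simp
      finally show ?thesis .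
    qed
    then show "\<exists>n. \<forall>x y. agree n x y \<longrightarrow> cmod (W x s - W y s) \<le> e" by blast
  qed
qed

lemma dima_local:
  fixes W :: "(int \<Rightarrow> 'a) \<Rightarrow> 'h::finite kernel \<Rightarrow> complex"
  assumes st: "\<And>x. is_state (W x)" and D: "DIMA W" and loc: "local_elem b"
  shows "UC (\<lambda>x. W x b)"
proof -
  have l: "local_elem (ksa1 b)" "local_elem (ksa2 b)" using ksa_local[OF loc] by auto
  have u1: "UC (\<lambda>x. W x (ksa1 b))"
    using l(1) dima_local_sa[OF st D _ ksa_sa(1)] unfolding local_elem_def by blast
  have u2: "UC (\<lambda>x. W x (ksa2 b))"
    using l(2) dima_local_sa[OF st D _ ksa_sa(2)] unfolding local_elem_def by blast
  have bq: "b \<in> quasi_local" by (rule ql_local[OF loc])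
  have eq: "(\<lambda>x. W x b) = (\<lambda>x. (1/2) * W x (ksa1 b) + (-\<i>/2) * W x (ksa2 b))"
    using state_ksa[OF st bq] by (simp add: fun_eq_iff algebra_simps)
  show ?thesis unfolding eq by (rule UC_lin[OF u1 u2])
qed

lemma dima_all:
  fixes W :: "(int \<Rightarrow> 'a) \<Rightarrow> 'h::finite kernel \<Rightarrow> complex"
  assumes st: "\<And>x. is_state (W x)" and D: "DIMA W" and bq: "b \<in> quasi_local"
  shows "UC (\<lambda>x. W x b)"
  unfolding UC_def
proof (intro allI impI)
  fix e :: real assume e: "e > 0"
  obtain p where p: "local_elem p" "kb (e/6) (kminus b p)" using ql_approx[OF bq, of "e/6"] e by auto
  have pq: "p \<in> quasi_local" by (rule ql_local[OF p(1)])
  have mp: "kscale (-1) p \<in> quasi_local" by (rule ql_kscale[OF pq])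
  have km: "kminus b p = kadd b (kscale (-1) p)" by (simp add: kminus_def kadd_def kscale_def fun_eq_iff)
  have kmq: "kminus b p \<in> quasi_local" unfolding km by (rule ql_kadd[OF bq mp])
  have diff: "cmod (W x b - W x p) \<le> e/3" for x
  proof -
    have "W x (kminus b p) = W x b - W x p"
      unfolding km using st[of x] bq mp pq unfolding is_state_def by simp
    moreover have "cmod (W x (kminus b p)) \<le> 2 * (e/6)" by (rule state_bound[OF st kmq p(2)])
    ultimately show ?thesis by simp
  qed
  obtain n where n: "\<And>x y. agree n x y \<Longrightarrow> cmod (W x p - W y p) \<le> e/3"
    using dima_local[OF st D p(1)] e unfolding UC_def by (meson divide_pos_pos zero_less_numeral)
  have "cmod (W x b - W y b) \<le> e" if "agree n x y" for x y
  proof -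
    have eq: "W x b - W y b = ((W x b - W x p) + (W x p - W y p)) - (W y b - W y p)" by simp
    have "cmod (W x b - W y b) \<le> cmod ((W x b - W x p) + (W x p - W y p)) + cmod (W y b - W y p)"
      unfolding eq by (rule norm_triangle_ineq4)
    also have "\<dots> \<le> cmod (W x b - W x p) + cmod (W x p - W y p) + cmod (W y b - W y p)"
      using norm_triangle_ineq[of "W x b - W x p" "W x p - W y p"] by simp
    finally have "cmod (W x b - W y b) \<le> cmod (W x b - W x p) + cmod (W x p - W y p) + cmod (W y b - W y p)" .
    also have "\<dots> \<le> e/3 + e/3 + e/3" using diff[of x] diff[of y] n[OF that] by (intro add_mono) auto
    finally show ?thesis by simp
  qed
  then show "\<exists>n. \<forall>x y. agree n x y \<longrightarrow> cmod (W x b - W y b) \<le> e" by blast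
qed

theorem lemma3:
  fixes W :: "(int \<Rightarrow> 'a::{finite, discrete_topology}) \<Rightarrow> ((int \<Rightarrow> 'h::finite) \<Rightarrow> (int \<Rightarrow> 'h) \<Rightarrow> complex) \<Rightarrow> complex"
  assumes "cq_channel W"
  shows "(cq_K W ` quasi_local \<subseteq> {f. continuous_on UNIV f} \<longleftrightarrow>
           (\<forall>b\<in>quasi_local.
              (\<lambda>n::nat. SUP p \<in> {(x, y). \<forall>i. - int n \<le> i \<and> i \<le> int n \<longrightarrow> x i = y i}.
                   cmod (W (fst p) b - W (snd p) b)) \<longlonglongrightarrow> 0))
       \<and> (DIMA W \<longrightarrow> cq_K W ` quasi_local \<subseteq> {f. continuous_on UNIV f})"
proof -
  have st: "\<And>x. is_state (W x)" using assms by (simp add: cq_channel_def)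
  let ?A = "\<lambda>n::nat. {(x, y). \<forall>i. - int n \<le> i \<and> i \<le> int n \<longrightarrow> x i = y i} :: ((int \<Rightarrow> 'a) \<times> (int \<Rightarrow> 'a)) set"
  let ?f = "\<lambda>b p. cmod (W (fst p) b - W (snd p) b)"
  let ?g = "\<lambda>b (n::nat). SUP p \<in> ?A n. ?f b p"
  have memA: "(x, y) \<in> ?A n \<longleftrightarrow> agree n x y" for n x y by (simp add: agree_def)
  have neA: "?A n \<noteq> {}" for n
  proof
    assume e: "?A n = {}"
    have "(undefined, undefined) \<in> ?A n" by simp
    then show False unfolding e by simp
  qed
  have UC_g: "?g b \<longlonglongrightarrow> 0" if u: "UC (\<lambda>x. W x b)" for b
  proof (rule LIMSEQ_I)
    fix r :: real assume r: "0 < r"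
    have r2: "r/2 > 0" using r by simp
    obtain n0 where n0: "\<And>x y. agree n0 x y \<Longrightarrow> cmod (W x b - W y b) \<le> r/2"
      using u r2 unfolding UC_def by blast
    have "norm (?g b n - 0) < r" if n: "n \<ge> n0" for n
    proof -
      have le: "?f b p \<le> r/2" if "p \<in> ?A n" for p
      proof -
        obtain x y where p: "p = (x, y)" by (cases p)
        then have "agree n x y" using that memA by simp
        then have "agree n0 x y" using agree_mono n by blast
        then show ?thesis using n0 p by simp
      qed
      have up: "?g b n \<le> r/2" by (rule cSUP_least[OF neA le])
      have bdd: "bdd_above (?f b ` ?A n)" by (rule bdd_aboveI2[OF le])
      have mem: "(undefined, undefined) \<in> ?A n" by simp
      have lo: "0 \<le> ?g b n" by (rule cSUP_upper2[OF bdd mem]) simp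
      show ?thesis using up lo r by simp
    qed
    then show "\<exists>no. \<forall>n\<ge>no. norm (?g b n - 0) < r" by blast
  qed
  have g_UC: "UC (\<lambda>x. W x b)" if bq: "b \<in> quasi_local" and g: "?g b \<longlonglongrightarrow> 0" for b
  proof -
    obtain R where R: "\<And>x. cmod (W x b) \<le> R" using channel_bound[of W, OF st bq] by blast
    show ?thesis unfolding UC_def
    proof (intro allI impI)
      fix e :: real assume e: "e > 0"
      obtain N where N: "\<And>n. n \<ge> N \<Longrightarrow> norm (?g b n - 0) < e" using LIMSEQ_D[OF g e] by blast
      have "cmod (W x b - W y b) \<le> e" if "agree N x y" for x y
      proof -
        have bnd: "?f b p \<le> R + R" if "p \<in> ?A N" for p
        proof -
          have "?f b p \<le> cmod (W (fst p) b) + cmod (W (snd p) b)" by (rule norm_triangle_ineq4)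
          then show ?thesis using R[of "fst p"] R[of "snd p"] by linarith
        qed
        have bdd: "bdd_above (?f b ` ?A N)" by (rule bdd_aboveI2[OF bnd])
        have mem: "(x, y) \<in> ?A N" using that memA by simp
        have "?f b (x, y) \<le> ?g b N" by (rule cSUP_upper[OF mem bdd])
        moreover have "?g b N < e" using N[of N] by simp
        ultimately show ?thesis by simp
      qed
      then show "\<exists>n. \<forall>x y. agree n x y \<longrightarrow> cmod (W x b - W y b) \<le> e" by blast
    qed
  qed
  have cK1: "cq_K W ` quasi_local \<subseteq> {f. continuous_on UNIV f} \<longleftrightarrow> (\<forall>b\<in>quasi_local. continuous_on UNIV (\<lambda>x. W x b))"
    by (auto simp: cq_K_def)
  have cK2: "(\<forall>b\<in>quasi_local. continuous_on UNIV (\<lambda>x. W x b)) \<longleftrightarrow> (\<forall>b\<in>quasi_local. UC (\<lambda>x. W x b))"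
    using UC_imp_cont cont_imp_UC by blast
  have pA: "(\<forall>b\<in>quasi_local. UC (\<lambda>x. W x b)) \<longleftrightarrow> (\<forall>b\<in>quasi_local. ?g b \<longlonglongrightarrow> 0)"
    using UC_g g_UC by blast
  have pB: "DIMA W \<longrightarrow> (\<forall>b\<in>quasi_local. UC (\<lambda>x. W x b))"
    using dima_all[of W, OF st] by blast
  show ?thesis using cK1 cK2 pA pB by blast
qed

end
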